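(* Let $\mathbf z=(z_1,\dots,z_n)\in\bar\Sigma^n$, $\mathbf y=(y_1,\dots,y_n)\in\Sigma^n$ and $\mathbf r=(r_1,\dots,r_n)\in\{0,1\}^n$, and let $\mathbf z'$ be the result of the Rewrite-MDM transition, $z'_i=y_i$ if $r_i=1$ and $z'_i=z_i$ if $r_i=0$. Then there is a sequence of three AP-MDM steps $\mathbf z\to\mathbf u^{(1)}\to\mathbf u^{(2)}\to\mathbf u^{(3)}$ with $\mathbf u^{(3)}=\mathbf z'$; i.e., there exist token vectors $\mathbf y^{(j)}$ and control vectors $\mathbf c^{(j)}$ ($j=1,2,3$) of the appropriate lengths such that $\mathbf u^{(1)}=g(\mathbf z,\mathbf y^{(1)},\mathbf c^{(1)})$, $\mathbf u^{(2)}=g(\mathbf u^{(1)},\mathbf y^{(2)},\mathbf c^{(2)})$, $\mathbf u^{(3)}=g(\mathbf u^{(2)},\mathbf y^{(3)},\mathbf c^{(3)})=\mathbf z'$.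
   Context: Vocabulary $\Sigma$ with mask token $\mathsf M$, $\bar\Sigma=\Sigma\cup\{\mathsf M\}$. One AP-MDM step: given the current sequence $\mathbf x\in\bar\Sigma^m$, a mask-free token vector $\mathbf y\in\Sigma^m$ and control vector $\mathbf c\in(\{0,1\}^3)^m$, the next sequence is $g(\mathbf x,\mathbf y,\mathbf c)=(s_1,\dots,s_m)$ (concatenation of strings), where $s_i=\mathrm{insert}\circ\mathrm{delete}\circ\mathrm{remask}(y_i)$ with $\mathrm{remask}(y)=\mathsf M$ if $c_i[1]=1$, $=y$ if $x_i=\mathsf M$ and $c_i[1]=0$, $=x_i$ otherwise; $\mathrm{delete}(y)=\varepsilon$ (empty string) if $x_i=\mathsf M$ and $c_i[3]=1$, else $y$; $\mathrm{insert}(y)=(y,\mathsf M)$ if $c_i[2]=1$, else $y$. A Rewrite-MDM step, with binary rewrite signals $r_i$, replaces $z_i$ by $y_i$ when $r_i=1$ and keeps $z_i$ when $r_i=0$. *)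

theory Defs
  imports Main
begin

datatype 'a tok = Tok 'a | Mask

text \<open>Control triple (c[1], c[2], c[3]) = (remask, insert, delete).\<close>
type_synonym ctrl = "bool \<times> bool \<times> bool"

definition remask :: "'a tok \<Rightarrow> 'a \<Rightarrow> ctrl \<Rightarrow> 'a tok" where
  "remask x y c = (if fst c then Mask else if x = Mask then Tok y else x)"

definition delete :: "'a tok \<Rightarrow> ctrl \<Rightarrow> 'a tok \<Rightarrow> 'a tok list" where
  "delete x c t = (if x = Mask \<and> snd (snd c) then [] else [t])"

definition insert_mask :: "ctrl \<Rightarrow> 'a tok list \<Rightarrow> 'a tok list" where
  "insert_mask c s = (if fst (snd c) then s @ [Mask] else s)"

definition ap_local :: "'a tok \<Rightarrow> 'a \<Rightarrow> ctrl \<Rightarrow> 'a tok list" where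
  "ap_local x y c = insert_mask c (delete x c (remask x y c))"

text \<open>One AP-MDM step g(x, y, c) (intended for length x = length y = length c).\<close>
definition apmdm_step :: "'a tok list \<Rightarrow> 'a list \<Rightarrow> ctrl list \<Rightarrow> 'a tok list" where
  "apmdm_step x y c = concat (map (\<lambda>(xi, yi, ci). ap_local xi yi ci) (zip x (zip y c)))"

definition rewrite_step :: "'a tok list \<Rightarrow> 'a list \<Rightarrow> bool list \<Rightarrow> 'a tok list" where
  "rewrite_step z y r = map (\<lambda>(zi, yi, ri). if ri then Tok yi else zi) (zip z (zip y r))"

end

theory Submission
  imports Defs
begin

lemma step_nomod:
  "length y = length x \<Longrightarrow> length bs = length x \<Longrightarrow>
   apmdm_step x y (map (\<lambda>b. (b, False, False)) bs) =
   map (\<lambda>(xi, yi, b). if b then Mask else if xi = Mask then Tok yi else xi) (zip x (zip y bs))"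
proof (induction x arbitrary: y bs)
  case Nil
  then show ?case by (simp add: apmdm_step_def)
next
  case (Cons a x)
  then obtain b y' c bs' where "y = b # y'" "bs = c # bs'"
    by (metis length_Suc_conv)
  with Cons show ?case
    by (auto simp: apmdm_step_def ap_local_def insert_mask_def delete_def remask_def)
qed

theorem mainTheorem5:
  fixes z :: "'a tok list" and y :: "'a list" and r :: "bool list"
  assumes "length y = length z" and "length r = length z"
  shows "\<exists>y1 c1 u1 y2 c2 u2 y3 c3.
           length y1 = length z \<and> length c1 = length z \<and> u1 = apmdm_step z y1 c1 \<and>
           length y2 = length u1 \<and> length c2 = length u1 \<and> u2 = apmdm_step u1 y2 c2 \<and>
           length y3 = length u2 \<and> length c3 = length u2 \<and>
           apmdm_step u2 y3 c3 = rewrite_step z y r"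
proof -
  define b1 where "b1 = map (\<lambda>(zi, ri). ri \<or> zi = Mask) (zip z r)"
  define u1 where "u1 = apmdm_step z y (map (\<lambda>b. (b, False, False)) b1)"
  have u1: "u1 = map (\<lambda>(zi, ri). if ri then Mask else zi) (zip z r)"
    unfolding u1_def using assms
    by (subst step_nomod) (auto simp: b1_def intro!: nth_equalityI)
  define b2 where "b2 = map (\<lambda>(zi, ri). \<not> ri \<and> zi = Mask) (zip z r)"
  define u2 where "u2 = apmdm_step u1 y (map (\<lambda>b. (b, False, False)) b2)"
  have u2: "u2 = rewrite_step z y r"
    unfolding u2_def using assms
    by (subst step_nomod) (auto simp: u1 b2_def rewrite_step_def intro!: nth_equalityI)
  define b3 where "b3 = map (\<lambda>zi. zi = Mask) u2"
  have u3: "apmdm_step u2 y (map (\<lambda>b. (b, False, False)) b3) = rewrite_step z y r"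
    using assms
    by (subst step_nomod) (auto simp: u2 b3_def rewrite_step_def intro!: nth_equalityI)
  have l1: "length u1 = length z" using assms by (simp add: u1)
  have l2: "length u2 = length z" using assms by (simp add: u2 rewrite_step_def)
  show ?thesis
    apply (rule exI[of _ y], rule exI[of _ "map (\<lambda>b. (b, False, False)) b1"], rule exI[of _ u1])
    apply (rule exI[of _ y], rule exI[of _ "map (\<lambda>b. (b, False, False)) b2"], rule exI[of _ u2])
    apply (rule exI[of _ y], rule exI[of _ "map (\<lambda>b. (b, False, False)) b3"])
    using assms l1 l2 u3 by (simp add: u1_def u2_def b1_def b2_def b3_def)
qed

end
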